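(* Let $f=\frac1n\sum_{i=1}^n f_i$ be convex, and suppose each $f_i$ is $L_i$-smooth for some $L_i>0$. Let $L=\max_{1\le i\le n}L_i$, let $\mu\in(0,2/L]$, and let the integers $t(k)\ge 1$ satisfy $\sum_{k=0}^\infty \beta^{t(k)}<\infty$. Let $\{\mathbf{x}_k\}$ be generated by NEAR-DGD$^+$ from an arbitrary initial point $\mathbf{x}_0\in\mathbb{R}^{np}$. Then for any minimizer $x_*\in X^*$, with $\mathbf{x}_*:=1_n\otimes x_*=(x_*^\top,\dots,x_*^\top)^\top$, $$\|\bar{\mathbf{x}}_k-\mathbf{x}_*\|=O(1)\quad\text{and}\quad \|\bar{\mathbf{x}}_{k+1}-\mathbf{x}_{k+1}\|=O(\beta^{t(k)})\qquad (k\to\infty).$$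
   Context: Let $n,p\in\mathbb{N}$. $W=(w_{ij})$ is an $n\times n$ doubly stochastic matrix whose associated directed graph is strongly connected and has a self-loop at every vertex ($w_{ii}>0$ for all $i$). $1_n\in\mathbb{R}^n$ is the all-ones vector, and $\beta\in[0,1)$ denotes the spectral norm of $W-\frac1n1_n1_n^\top$. Local costs $f_i:\mathbb{R}^p\to\mathbb{R}$ are differentiable, $f=\frac1n\sum_{i=1}^n f_i$, $f^*=\min f$, and $X^*=\{x: f(x)=f^*\}$ is assumed nonempty. A function $h$ is $L$-smooth if $\|\nabla h(x)-\nabla h(y)\|\le L\|x-y\|$ for all $x,y$. For $\mathbf{x}=(x_1^\top,\dots,x_n^\top)^\top\in\mathbb{R}^{np}$ write $\nabla F(\mathbf{x})=(\nabla f_1(x_1)^\top,\dots,\nabla f_n(x_n)^\top)^\top$. NEAR-DGD$^+$ with step size $\mu>0$ and consensus numbers $t(k)\in\mathbb{N}$ is the iteration $\mathbf{x}_{k+1}=(W^{t(k)}\otimes I_p)(\mathbf{x}_k-\mu\nabla F(\mathbf{x}_k))$, $k\ge0$, where $\otimes$ is the Kronecker product and $I_p$ the $p\times p$ identity. Writing $\mathbf{x}_k=(x_{1,k}^\top,\dots,x_{n,k}^\top)^\top$, set $\bar x_k=\frac1n\sum_{i=1}^n x_{i,k}\in\mathbb{R}^p$ and $\bar{\mathbf{x}}_k=1_n\otimes\bar x_k\in\mathbb{R}^{np}$. $\|\cdot\|$ is the Euclidean norm. *)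

theory Defs
  imports "HOL-Analysis.Analysis" "HOL-Library.Landau_Symbols"
begin

fun matpow :: "real^'n^'n \<Rightarrow> nat \<Rightarrow> real^'n^'n" where
  "matpow W 0 = mat 1"
| "matpow W (Suc k) = W ** matpow W k"

definition doubly_stochastic :: "real^'n^'n \<Rightarrow> bool" where
  "doubly_stochastic W \<longleftrightarrow>
     (\<forall>i j. W$i$j \<ge> 0) \<and> (\<forall>i. (\<Sum>j\<in>UNIV. W$i$j) = 1) \<and> (\<forall>j. (\<Sum>i\<in>UNIV. W$i$j) = 1)"

definition graph_edges :: "real^'n^'n \<Rightarrow> ('n \<times> 'n) set" where
  "graph_edges W = {(i,j). W$i$j > 0}"

definition strongly_connected :: "real^'n^'n \<Rightarrow> bool" where
  "strongly_connected W \<longleftrightarrow> (\<forall>i j. (i,j) \<in> (graph_edges W)\<^sup>*)"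

definition avg_mat :: "real^'n^'n" where
  "avg_mat = (\<chi> i j. 1 / real CARD('n))"

definition beta :: "real^'n^'n \<Rightarrow> real" where
  "beta W = onorm (\<lambda>x. (W - avg_mat) *v x)"

definition smooth :: "real \<Rightarrow> (real^'p \<Rightarrow> real^'p) \<Rightarrow> bool" where
  "smooth L gr \<longleftrightarrow> (\<forall>x y. norm (gr x - gr y) \<le> L * norm (x - y))"

text \<open>One NEAR-DGD+ step: agent i gets sum_j (W^t)_ij (x_j - mu grad f_j(x_j)),
  i.e. (W^t \<otimes> I_p)(x - mu \<nabla>F(x)) with stacked vectors as real^'p^'n.\<close>
definition neardgd_step ::
  "real^'n^'n \<Rightarrow> nat \<Rightarrow> real \<Rightarrow> ('n \<Rightarrow> real^'p \<Rightarrow> real^'p) \<Rightarrow> real^'p^'n \<Rightarrow> real^'p^'n" where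
  "neardgd_step W t mu gr x =
     (\<chi> i. \<Sum>j\<in>UNIV. (matpow W t)$i$j *\<^sub>R (x$j - mu *\<^sub>R gr j (x$j)))"

definition avg_stack :: "real^'p^'n \<Rightarrow> real^'p^'n" where
  "avg_stack x = (\<chi> i. (1 / real CARD('n)) *\<^sub>R (\<Sum>j\<in>UNIV. x$j))"

end

theory Submission
  imports Defs
begin


lemma line_deriv:
  fixes g :: "'a::real_inner \<Rightarrow> real"
  assumes grad: "\<And>z. (g has_derivative (\<lambda>h. G z \<bullet> h)) (at z)"
  shows "((\<lambda>s. g (x + s *\<^sub>R h)) has_field_derivative (G (x + s *\<^sub>R h) \<bullet> h)) (at s)"
proof -
  have "((\<lambda>s. x + s *\<^sub>R h) has_derivative (\<lambda>t. t *\<^sub>R h)) (at s)"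
    by (auto intro!: derivative_eq_intros)
  from diff_chain_at[OF this grad]
  have "((\<lambda>s. g (x + s *\<^sub>R h)) has_derivative (\<lambda>t. G (x + s *\<^sub>R h) \<bullet> (t *\<^sub>R h))) (at s)"
    by (simp add: o_def)
  then show ?thesis unfolding has_field_derivative_def
    by (rule has_derivative_eq_rhs) (auto simp: fun_eq_iff mult.commute)
qed

lemma descent:
  fixes g :: "'a::real_inner \<Rightarrow> real"
  assumes grad: "\<And>z. (g has_derivative (\<lambda>h. G z \<bullet> h)) (at z)"
    and lip: "\<And>u v. norm (G u - G v) \<le> L * norm (u - v)"
  shows "g y \<le> g x + G x \<bullet> (y - x) + L / 2 * (norm (y - x))^2"
proof -
  define h where "h = y - x"
  define \<phi> where "\<phi> s = g (x + s *\<^sub>R h) - s * (G x \<bullet> h) - L / 2 * s^2 * (norm h)^2" for s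
  have "\<phi> 1 \<le> \<phi> 0"
  proof (rule DERIV_nonpos_imp_nonincreasing[of 0 1 \<phi>])
    fix s :: real assume s: "0 \<le> s" "s \<le> 1"
    have d: "(\<phi> has_field_derivative (G (x + s *\<^sub>R h) \<bullet> h - G x \<bullet> h - L * s * (norm h)^2)) (at s)"
      unfolding \<phi>_def
      apply (intro DERIV_diff line_deriv[OF grad])
      apply (auto intro!: derivative_eq_intros)
      done
    have "G (x + s *\<^sub>R h) \<bullet> h - G x \<bullet> h = (G (x + s *\<^sub>R h) - G x) \<bullet> h" by (simp add: inner_diff_left)
    also have "\<dots> \<le> norm (G (x + s *\<^sub>R h) - G x) * norm h" by (rule norm_cauchy_schwarz)
    also have "\<dots> \<le> L * norm (s *\<^sub>R h) * norm h" using lip[of "x + s *\<^sub>R h" x] by (simp add: mult_right_mono)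
    also have "\<dots> = L * s * (norm h)^2" using s by (simp add: power2_eq_square)
    finally show "\<exists>y. (\<phi> has_real_derivative y) (at s) \<and> y \<le> 0" using d by auto
  qed simp
  then show ?thesis unfolding \<phi>_def h_def by simp
qed

lemma grad_ineq:
  fixes g :: "'a::real_inner \<Rightarrow> real"
  assumes grad: "\<And>z. (g has_derivative (\<lambda>h. G z \<bullet> h)) (at z)"
    and cv: "convex_on UNIV g"
  shows "g x + G x \<bullet> (y - x) \<le> g y"
proof -
  define h where "h = y - x"
  define \<psi> where "\<psi> s = g (x + s *\<^sub>R h)" for s
  have cvp: "convex_on UNIV \<psi>"
  proof (rule convex_onI)
    fix t a b :: real assume t: "t > 0" "t < 1"
    have "\<psi> ((1 - t) *\<^sub>R a + t *\<^sub>R b) = g ((1 - t) *\<^sub>R (x + a *\<^sub>R h) + t *\<^sub>R (x + b *\<^sub>R h))"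
      unfolding \<psi>_def by (simp add: algebra_simps)
    also have "\<dots> \<le> (1 - t) * \<psi> a + t * \<psi> b"
      unfolding \<psi>_def using t by (intro convex_onD[OF cv]) auto
    finally show "\<psi> ((1 - t) *\<^sub>R a + t *\<^sub>R b) \<le> (1 - t) * \<psi> a + t * \<psi> b" .
  qed simp
  have d: "(\<psi> has_field_derivative (G x \<bullet> h)) (at 0 within UNIV)"
    using line_deriv[OF grad, of x h 0] unfolding \<psi>_def by simp
  have "\<psi> 1 - \<psi> 0 \<ge> (G x \<bullet> h) * (1 - 0)"
    by (rule convex_on_imp_above_tangent[OF cvp]) (use d in auto)
  then show ?thesis unfolding \<psi>_def h_def by simp
qed

lemma cocoercive_aux:
  fixes g :: "'a::real_inner \<Rightarrow> real"
  assumes grad: "\<And>z. (g has_derivative (\<lambda>h. G z \<bullet> h)) (at z)"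
    and cv: "convex_on UNIV g"
    and lip: "\<And>u v. norm (G u - G v) \<le> L * norm (u - v)"
    and L: "L > 0"
  shows "g x + G x \<bullet> (y - x) + 1 / (2 * L) * (norm (G y - G x))^2 \<le> g y"
proof -
  define \<delta> where "\<delta> = G y - G x"
  define z where "z = y - (1 / L) *\<^sub>R \<delta>"
  have 1: "g x + G x \<bullet> (z - x) \<le> g z" by (rule grad_ineq[OF grad cv])
  have 2: "g z \<le> g y + G y \<bullet> (z - y) + L / 2 * (norm (z - y))^2" by (rule descent[OF grad lip])
  have e1: "G x \<bullet> (z - x) = G x \<bullet> (y - x) - (1 / L) * (G x \<bullet> \<delta>)"
    unfolding z_def by (simp add: inner_diff_right algebra_simps)
  have e2: "G y \<bullet> (z - y) = - (1 / L) * (G y \<bullet> \<delta>)"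
    unfolding z_def by (simp add: inner_diff_right algebra_simps)
  have e3: "L / 2 * (norm (z - y))^2 = 1 / (2 * L) * (norm \<delta>)^2"
    unfolding z_def using L by (simp add: power2_eq_square field_simps)
  have e4: "G y \<bullet> \<delta> - G x \<bullet> \<delta> = (norm \<delta>)^2"
    unfolding \<delta>_def by (simp add: power2_norm_eq_inner inner_diff_left)
  have "(1 / L) * (G y \<bullet> \<delta>) - (1 / L) * (G x \<bullet> \<delta>) = (1 / L) * (norm \<delta>)^2"
    using e4 by (simp add: diff_divide_distrib[symmetric])
  moreover have "(1 / L) * (norm \<delta>)^2 - 1 / (2 * L) * (norm \<delta>)^2 = 1 / (2 * L) * (norm \<delta>)^2"
    using L by (simp add: field_simps)
  ultimately show ?thesis using 1 2 e1 e2 e3 unfolding \<delta>_def[symmetric] by linarith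
qed

lemma cocoercive:
  fixes g :: "'a::real_inner \<Rightarrow> real"
  assumes grad: "\<And>z. (g has_derivative (\<lambda>h. G z \<bullet> h)) (at z)"
    and cv: "convex_on UNIV g"
    and lip: "\<And>u v. norm (G u - G v) \<le> L * norm (u - v)"
    and L: "L > 0"
  shows "1 / L * (norm (G y - G x))^2 \<le> (G y - G x) \<bullet> (y - x)"
proof -
  have a: "g x + G x \<bullet> (y - x) + 1 / (2 * L) * (norm (G y - G x))^2 \<le> g y"
    by (rule cocoercive_aux[OF assms])
  have b: "g y + G y \<bullet> (x - y) + 1 / (2 * L) * (norm (G x - G y))^2 \<le> g x"
    by (rule cocoercive_aux[OF assms])
  have n: "norm (G x - G y) = norm (G y - G x)" by (rule norm_minus_commute)
  have i: "G y \<bullet> (x - y) = - (G y \<bullet> (y - x))" by (simp add: inner_diff_right)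
  have "1 / L * (norm (G y - G x))^2 = 1 / (2 * L) * (norm (G y - G x))^2 + 1 / (2 * L) * (norm (G y - G x))^2"
    by (simp add: field_simps)
  then show ?thesis using a b n i by (simp add: inner_diff_left) 
qed

lemma helper_le: "(Y::real) \<le> X \<Longrightarrow> a - X + Y \<le> a" by simp

lemma nonexpansive:
  fixes g :: "'a::real_inner \<Rightarrow> real"
  assumes grad: "\<And>z. (g has_derivative (\<lambda>h. G z \<bullet> h)) (at z)"
    and cv: "convex_on UNIV g"
    and lip: "\<And>u v. norm (G u - G v) \<le> L * norm (u - v)"
    and L: "L > 0" and mu: "0 < mu" "mu \<le> 2 / L"
  shows "norm ((y - mu *\<^sub>R G y) - (x - mu *\<^sub>R G x)) \<le> norm (y - x)"
proof -
  define \<delta> where "\<delta> = G y - G x"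
  have c: "1 / L * (norm \<delta>)^2 \<le> \<delta> \<bullet> (y - x)" unfolding \<delta>_def by (rule cocoercive[OF assms(1-4)])
  have eq: "(y - mu *\<^sub>R G y) - (x - mu *\<^sub>R G x) = (y - x) - mu *\<^sub>R \<delta>"
    unfolding \<delta>_def by (simp add: algebra_simps)
  have "(norm ((y - x) - mu *\<^sub>R \<delta>))^2 = (norm (y - x))^2 - 2 * mu * (\<delta> \<bullet> (y - x)) + mu^2 * (norm \<delta>)^2"
    by (simp only: power2_norm_eq_inner) (simp add: inner_diff_left inner_diff_right inner_commute power2_eq_square algebra_simps)
  also have "\<dots> \<le> (norm (y - x))^2 - 2 * mu * (1 / L * (norm \<delta>)^2) + mu^2 * (norm \<delta>)^2"
    using mult_left_mono[OF c, of "2 * mu"] mu by simp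
  also have "\<dots> \<le> (norm (y - x))^2"
  proof -
    have m1: "mu * mu \<le> mu * (2 / L)" using mu by (metis less_eq_real_def mult_left_mono)
    have m2: "(mu * mu) * (norm \<delta>)^2 \<le> (mu * (2 / L)) * (norm \<delta>)^2"
      by (rule mult_right_mono[OF m1]) simp
    have e: "2 * mu * (1 / L * (norm \<delta>)^2) = (mu * (2 / L)) * (norm \<delta>)^2" by simp
    have e2: "mu^2 = mu * mu" by (rule power2_eq_square)
    have m3: "mu^2 * (norm \<delta>)^2 \<le> 2 * mu * (1 / L * (norm \<delta>)^2)"
      using m2 unfolding e[symmetric] e2[symmetric] .
    show ?thesis using m3 by (rule helper_le)
  qed
  finally show ?thesis unfolding eq by (rule power2_le_imp_le) simp
qed

lemma grad_zero_at_min: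
  fixes g :: "'a::real_inner \<Rightarrow> real"
  assumes grad: "\<And>z. (g has_derivative (\<lambda>h. G z \<bullet> h)) (at z)"
    and lip: "\<And>u v. norm (G u - G v) \<le> L * norm (u - v)"
    and L: "L > 0" and min: "\<And>y. g xs \<le> g y"
  shows "G xs = 0"
proof -
  define y where "y = xs - (1 / L) *\<^sub>R G xs"
  have "g y \<le> g xs + G xs \<bullet> (y - xs) + L / 2 * (norm (y - xs))^2" by (rule descent[OF grad lip])
  also have "\<dots> = g xs - 1 / (2 * L) * (norm (G xs))^2"
  proof -
    have a: "G xs \<bullet> (y - xs) = - (1 / L) * (norm (G xs))^2"
      unfolding y_def by (simp add: power2_norm_eq_inner)
    have b: "(norm (y - xs))^2 = (1 / L)^2 * (norm (G xs))^2"
      unfolding y_def using L by (simp add: power_divide)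
    show ?thesis unfolding a b using L by (simp add: field_simps power2_eq_square)
  qed
  finally have "1 / (2 * L) * (norm (G xs))^2 \<le> 0" using min[of y] by simp
  then have "(norm (G xs))^2 \<le> 0" using L by (simp add: divide_le_0_iff)
  then show ?thesis by simp
qed



definition kron :: "real^'n^'n \<Rightarrow> real^'p^'n \<Rightarrow> real^'p^'n" where
  "kron B z = (\<chi> i. \<Sum>j\<in>UNIV. B$i$j *\<^sub>R z$j)"

lemma norm_le_sum_comp: "norm (x :: 'a::real_normed_vector^'m) \<le> (\<Sum>i\<in>UNIV. norm (x$i))"
  by (simp add: norm_vec_def L2_set_le_sum)

lemma sq_norm_vec: "(norm (u::'a::real_inner^'m))^2 = (\<Sum>i\<in>UNIV. (norm (u$i))^2)"
  by (simp add: power2_norm_eq_inner inner_vec_def)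

lemma kron_norm:
  fixes B :: "real^'n^'n" and z :: "real^'p^'n"
  shows "norm (kron B z) \<le> onorm ((*v) B) * norm z"
proof -
  define b where "b = onorm ((*v) B)"
  have b0: "0 \<le> b" unfolding b_def by (rule onorm_pos_le) simp
  define v where "v c = (\<chi> j. z$j$c)" for c
  have comp: "kron B z $ i $ c = (B *v v c) $ i" for i c
    unfolding kron_def v_def matrix_vector_mult_def by (simp add: sum_component mult.commute)
  have "(norm (kron B z))^2 = (\<Sum>i\<in>UNIV. \<Sum>c\<in>UNIV. (kron B z $ i $ c)^2)"
    by (simp add: sq_norm_vec)
  also have "\<dots> = (\<Sum>c\<in>UNIV. \<Sum>i\<in>UNIV. ((B *v v c) $ i)^2)"
    unfolding comp by (rule sum.swap)
  also have "\<dots> = (\<Sum>c\<in>UNIV. (norm (B *v v c))^2)"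
    by (simp add: sq_norm_vec)
  also have "\<dots> \<le> (\<Sum>c\<in>UNIV. (b * norm (v c))^2)"
  proof (rule sum_mono)
    fix c
    have "norm (B *v v c) \<le> b * norm (v c)" unfolding b_def by (rule onorm) simp
    then show "(norm (B *v v c))^2 \<le> (b * norm (v c))^2" by (simp add: power_mono)
  qed
  also have "\<dots> = b^2 * (\<Sum>c\<in>UNIV. \<Sum>j\<in>UNIV. (z$j$c)^2)"
    by (simp add: power_mult_distrib sum_distrib_left sq_norm_vec v_def)
  also have "\<dots> = b^2 * (\<Sum>j\<in>UNIV. \<Sum>c\<in>UNIV. (z$j$c)^2)"
    by (subst sum.swap) (rule refl)
  also have "\<dots> = b^2 * (norm z)^2"
    by (simp add: sq_norm_vec)
  also have "\<dots> = (b * norm z)^2" by (simp add: power_mult_distrib)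
  finally show ?thesis unfolding b_def[symmetric]
    by (rule power2_le_imp_le) (simp add: b0)
qed

lemma kron_diff_left: "kron (A - B) z = kron A z - kron B z"
  unfolding kron_def by (simp add: vec_eq_iff scaleR_diff_left sum_subtractf)

lemma kron_diff_right: "kron A (z - w) = kron A z - kron A w"
  unfolding kron_def by (simp add: vec_eq_iff scaleR_diff_right sum_subtractf)

lemma avg_diff: "avg_stack (z - w) = avg_stack z - avg_stack w"
  unfolding avg_stack_def by (simp add: vec_eq_iff sum_subtractf scaleR_diff_right)

lemma kron_avg_mat: "kron avg_mat z = avg_stack z"
  unfolding kron_def avg_mat_def avg_stack_def by (simp add: scaleR_sum_right)

lemma kron_one: "kron (mat 1) (z::real^'p^'n) = z"
proof -
  have "(\<Sum>j\<in>UNIV. (mat 1 :: real^'n^'n)$i$j *\<^sub>R z$j) = z$i" for i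
  proof -
    have "(\<Sum>j\<in>UNIV. (mat 1 :: real^'n^'n)$i$j *\<^sub>R z$j) = (\<Sum>j\<in>UNIV. if i = j then z$j else 0)"
      by (rule sum.cong) (auto simp: mat_def)
    then show ?thesis by simp
  qed
  then show ?thesis unfolding kron_def by (simp add: vec_eq_iff)
qed

lemma kron_mult: "kron (A ** B) z = kron A (kron B z)"
proof -
  have "(\<Sum>j\<in>UNIV. (\<Sum>k\<in>UNIV. A$i$k * B$k$j) *\<^sub>R z$j) = (\<Sum>k\<in>UNIV. A$i$k *\<^sub>R (\<Sum>j\<in>UNIV. B$k$j *\<^sub>R z$j))" for i
  proof -
    have "(\<Sum>j\<in>UNIV. (\<Sum>k\<in>UNIV. A$i$k * B$k$j) *\<^sub>R z$j) = (\<Sum>j\<in>UNIV. \<Sum>k\<in>UNIV. A$i$k *\<^sub>R (B$k$j *\<^sub>R z$j))"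
      by (simp add: scaleR_sum_left)
    also have "\<dots> = (\<Sum>k\<in>UNIV. \<Sum>j\<in>UNIV. A$i$k *\<^sub>R (B$k$j *\<^sub>R z$j))" by (rule sum.swap)
    also have "\<dots> = (\<Sum>k\<in>UNIV. A$i$k *\<^sub>R (\<Sum>j\<in>UNIV. B$k$j *\<^sub>R z$j))" by (simp add: scaleR_sum_right)
    finally show ?thesis .
  qed
  then show ?thesis unfolding kron_def matrix_matrix_mult_def by (simp add: vec_eq_iff)
qed

lemma colsum_kron:
  fixes M :: "real^'n^'n" and z :: "real^'p^'n"
  assumes "\<forall>j. (\<Sum>i\<in>UNIV. M$i$j) = 1"
  shows "(\<Sum>i\<in>UNIV. kron M z $ i) = (\<Sum>j\<in>UNIV. z $ j)"
proof -
  have "(\<Sum>i\<in>UNIV. kron M z $ i) = (\<Sum>i\<in>UNIV. \<Sum>j\<in>UNIV. M$i$j *\<^sub>R z$j)"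
    unfolding kron_def by simp
  also have "\<dots> = (\<Sum>j\<in>UNIV. \<Sum>i\<in>UNIV. M$i$j *\<^sub>R z$j)" by (rule sum.swap)
  also have "\<dots> = (\<Sum>j\<in>UNIV. (\<Sum>i\<in>UNIV. M$i$j) *\<^sub>R z$j)" by (simp add: scaleR_sum_left)
  finally have "(\<Sum>i\<in>UNIV. kron M z $ i) = (\<Sum>j\<in>UNIV. (\<Sum>i\<in>UNIV. M$i$j) *\<^sub>R z$j)" .
  then show ?thesis using assms by simp
qed

lemma avg_kron:
  fixes M :: "real^'n^'n" and z :: "real^'p^'n"
  assumes "\<forall>j. (\<Sum>i\<in>UNIV. M$i$j) = 1"
  shows "avg_stack (kron M z) = avg_stack z"
  unfolding avg_stack_def by (simp only: colsum_kron[OF assms])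

lemma kron_avg:
  fixes M :: "real^'n^'n" and z :: "real^'p^'n"
  assumes "\<forall>i. (\<Sum>j\<in>UNIV. M$i$j) = 1"
  shows "kron M (avg_stack z) = avg_stack z"
proof -
  define c where "c = (1 / real CARD('n)) *\<^sub>R (\<Sum>j\<in>UNIV. z$j)"
  have a: "avg_stack z = (\<chi> i. c)" unfolding avg_stack_def c_def by simp
  have "(\<Sum>j\<in>UNIV. M$i$j *\<^sub>R c) = c" for i
    using assms by (simp add: scaleR_sum_left[symmetric])
  then show ?thesis unfolding a kron_def by (simp add: vec_eq_iff)
qed

lemma avg_avg: "avg_stack (avg_stack (z :: real^'p^'n)) = avg_stack z"
proof -
  define c where "c = (1 / real CARD('n)) *\<^sub>R (\<Sum>j\<in>UNIV. z$j)"
  have "avg_stack z = (\<chi> i. c)" unfolding avg_stack_def c_def by simp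
  moreover have "avg_stack (\<chi> i. c :: real^'p^'n) = (\<chi> i. c)"
  proof -
    have s: "(\<Sum>i\<in>(UNIV::'n set). c) = real CARD('n) *\<^sub>R c" by (simp only: sum_constant_scaleR)
    have e: "(\<lambda>j. (\<chi> i. c :: real^'p^'n) $ j) = (\<lambda>j. c)" by simp
    show ?thesis unfolding avg_stack_def e s by simp
  qed
  ultimately show ?thesis by simp
qed

lemma matpow_colsum:
  assumes ds: "doubly_stochastic W"
  shows "\<forall>j. (\<Sum>i\<in>UNIV. matpow W t $i$j) = 1"
proof (induction t)
  case 0 then show ?case by (simp add: mat_def if_distrib cong: if_cong)
next
  case (Suc t)
  have cs: "\<forall>j. (\<Sum>i\<in>UNIV. W$i$j) = 1" using ds unfolding doubly_stochastic_def by blast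
  show ?case
  proof
    fix j
    have "(\<Sum>i\<in>UNIV. matpow W (Suc t) $i$j) = (\<Sum>i\<in>UNIV. \<Sum>k\<in>UNIV. W$i$k * matpow W t $k$j)"
      by (simp add: matrix_matrix_mult_def)
    also have "\<dots> = (\<Sum>k\<in>UNIV. \<Sum>i\<in>UNIV. W$i$k * matpow W t $k$j)" by (rule sum.swap)
    also have "\<dots> = (\<Sum>k\<in>UNIV. (\<Sum>i\<in>UNIV. W$i$k) * matpow W t $k$j)" by (simp add: sum_distrib_right)
    finally have "(\<Sum>i\<in>UNIV. matpow W (Suc t) $i$j) = (\<Sum>k\<in>UNIV. (\<Sum>i\<in>UNIV. W$i$k) * matpow W t $k$j)" .
    then show "(\<Sum>i\<in>UNIV. matpow W (Suc t) $i$j) = 1" using cs Suc by simp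
  qed
qed

lemma beta_nonneg: "0 \<le> beta W"
  unfolding beta_def by (rule onorm_pos_le) simp

lemma consensus_bound:
  fixes z :: "real^'p^'n"
  assumes ds: "doubly_stochastic W" and t: "t \<ge> 1"
  shows "norm (kron (matpow W t) z - avg_stack z) \<le> beta W ^ t * norm z"
proof -
  have rs: "\<forall>i. (\<Sum>j\<in>UNIV. W$i$j) = 1" using ds unfolding doubly_stochastic_def by blast
  have cs: "\<forall>j. (\<Sum>i\<in>UNIV. W$i$j) = 1" using ds unfolding doubly_stochastic_def by blast
  have D: "norm (kron W v - avg_stack v) \<le> beta W * norm v" for v :: "real^'p^'n"
  proof -
    have "kron W v - avg_stack v = kron (W - avg_mat) v" by (simp add: kron_diff_left kron_avg_mat)
    then show ?thesis using kron_norm[of "W - avg_mat" v] unfolding beta_def by simp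
  qed
  have "norm (kron (matpow W (Suc m)) z - avg_stack z) \<le> beta W ^ Suc m * norm z" for m
  proof (induction m)
    case 0 then show ?case using D[of z] by (simp add: kron_mult kron_one)
  next
    case (Suc m)
    define v where "v = kron (matpow W (Suc m)) z - avg_stack z"
    have "kron (matpow W (Suc (Suc m))) z - avg_stack z = kron W v - avg_stack v"
      unfolding v_def
      by (simp add: kron_mult kron_diff_right avg_diff kron_avg[OF rs] avg_kron[OF matpow_colsum[OF ds]] avg_kron[OF cs] avg_avg)
    also have "norm \<dots> \<le> beta W * norm v" by (rule D)
    also have "\<dots> \<le> beta W * (beta W ^ Suc m * norm z)"
      using Suc.IH unfolding v_def by (rule mult_left_mono) (rule beta_nonneg)
    finally show ?case by (simp add: mult.assoc)
  qed
  moreover obtain m where "t = Suc m" using t by (cases t) auto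
  ultimately show ?thesis by simp
qed



theorem theorem2p3:
  fixes W :: "real^'n^'n"
    and fi :: "'n \<Rightarrow> real^'p \<Rightarrow> real"
    and gr :: "'n \<Rightarrow> real^'p \<Rightarrow> real^'p"
    and Li :: "'n \<Rightarrow> real"
    and mu :: real
    and t :: "nat \<Rightarrow> nat"
    and x :: "nat \<Rightarrow> real^'p^'n"
    and xs :: "real^'p"
  assumes ds: "doubly_stochastic W"
    and sc: "strongly_connected W"
    and loops: "\<forall>i. W$i$i > 0"
    and grad: "\<forall>i z. (fi i has_derivative (\<lambda>h. gr i z \<bullet> h)) (at z)"
    and cvx: "convex_on UNIV (\<lambda>z. (1 / real CARD('n)) * (\<Sum>i\<in>UNIV. fi i z))"
    and Lpos: "\<forall>i. Li i > 0"
    and Lsm: "\<forall>i. smooth (Li i) (gr i)"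
    and mu: "0 < mu" "mu \<le> 2 / Max (range Li)"
    and tpos: "\<forall>k. t k \<ge> 1"
    and tsum: "summable (\<lambda>k. beta W ^ t k)"
    and iter: "\<forall>k. x (Suc k) = neardgd_step W (t k) mu gr (x k)"
    and xsmin: "\<forall>y. (1 / real CARD('n)) * (\<Sum>i\<in>UNIV. fi i xs)
                      \<le> (1 / real CARD('n)) * (\<Sum>i\<in>UNIV. fi i y)"
  shows "(\<lambda>k. norm (avg_stack (x k) - (\<chi> i. xs))) \<in> O(\<lambda>k. 1)
     \<and> (\<lambda>k. norm (avg_stack (x (Suc k)) - x (Suc k))) \<in> O(\<lambda>k. beta W ^ t k)"
proof -
  define n where "n = real CARD('n)"
  have n0: "n > 0" unfolding n_def by simp
  define L where "L = Max (range Li)"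
  have LiL: "Li i \<le> L" for i unfolding L_def by (rule Max_ge) auto
  have L0: "L > 0" using LiL[of undefined] Lpos by (metis less_le_trans)
  have mu2: "mu \<le> 2 / L" using mu(2) unfolding L_def .
  define F where "F z = (1 / n) * (\<Sum>i\<in>UNIV. fi i z)" for z
  define Gf where "Gf z = (1 / n) *\<^sub>R (\<Sum>i\<in>UNIV. gr i z)" for z
  have lipi: "norm (gr i u - gr i v) \<le> L * norm (u - v)" for i u v
  proof -
    have "norm (gr i u - gr i v) \<le> Li i * norm (u - v)" using Lsm unfolding smooth_def by blast
    also have "\<dots> \<le> L * norm (u - v)" using LiL[of i] by (simp add: mult_right_mono)
    finally show ?thesis .
  qed
  have Fd: "(F has_derivative (\<lambda>h. Gf z \<bullet> h)) (at z)" for z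
  proof -
    have "((\<lambda>z. \<Sum>i\<in>UNIV. fi i z) has_derivative (\<lambda>h. \<Sum>i\<in>UNIV. gr i z \<bullet> h)) (at z)"
      using grad by (intro has_derivative_sum) auto
    then have "((\<lambda>z. (1 / n) * (\<Sum>i\<in>UNIV. fi i z)) has_derivative (\<lambda>h. (1 / n) * (\<Sum>i\<in>UNIV. gr i z \<bullet> h))) (at z)"
      by (rule has_derivative_mult_right)
    then show ?thesis unfolding F_def Gf_def
      by (rule has_derivative_eq_rhs) (simp add: fun_eq_iff inner_sum_left)
  qed
  have Fcvx: "convex_on UNIV F" using cvx unfolding F_def n_def .
  have Glip: "norm (Gf u - Gf v) \<le> L * norm (u - v)" for u v
  proof -
    have "Gf u - Gf v = (1 / n) *\<^sub>R (\<Sum>i\<in>UNIV. gr i u - gr i v)"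
      unfolding Gf_def by (simp add: sum_subtractf scaleR_diff_right)
    then have "norm (Gf u - Gf v) = (1 / n) * norm (\<Sum>i\<in>UNIV. gr i u - gr i v)" using n0 by simp
    also have "\<dots> \<le> (1 / n) * (\<Sum>i\<in>(UNIV::'n set). L * norm (u - v))"
    proof -
      have "norm (\<Sum>i\<in>UNIV. gr i u - gr i v) \<le> (\<Sum>i\<in>UNIV. norm (gr i u - gr i v))" by (rule norm_sum)
      also have "\<dots> \<le> (\<Sum>i\<in>(UNIV::'n set). L * norm (u - v))" by (rule sum_mono) (rule lipi)
      finally show ?thesis using n0 by (intro mult_left_mono) auto
    qed
    also have "\<dots> = L * norm (u - v)" using n0 unfolding n_def by simp
    finally show ?thesis .
  qed
  have Gxs: "Gf xs = 0"
    by (rule grad_zero_at_min[OF Fd Glip L0]) (use xsmin in \<open>simp add: F_def n_def\<close>)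
  have nonexp: "norm ((u - mu *\<^sub>R Gf u) - xs) \<le> norm (u - xs)" for u
    using nonexpansive[OF Fd Fcvx Glip L0 mu(1) mu2, of u xs] Gxs by simp
  define y where "y k = (\<chi> j. x k $ j - mu *\<^sub>R gr j (x k $ j))" for k
  define A where "A k = avg_stack (x k)" for k
  define xb where "xb k = (1 / n) *\<^sub>R (\<Sum>j\<in>UNIV. x k $ j)" for k
  define a where "a k = norm (xb k - xs)" for k
  define d where "d k = norm (x k - A k)" for k
  define b where "b k = beta W ^ t k" for k
  have Axb: "A k = (\<chi> i. xb k)" for k unfolding A_def avg_stack_def xb_def n_def by simp
  have b0: "b k \<ge> 0" for k unfolding b_def using beta_nonneg[of W] by simp
  have a0: "a k \<ge> 0" for k unfolding a_def by simp
  have d0: "d k \<ge> 0" for k unfolding d_def by simp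
  have cs: "\<forall>j. (\<Sum>i\<in>UNIV. matpow W (t k) $i$j) = 1" for k by (rule matpow_colsum[OF ds])
  have F1: "x (Suc k) = kron (matpow W (t k)) (y k)" for k
    using iter unfolding neardgd_step_def kron_def y_def by simp
  have comp: "norm (x k $ j - xb k) \<le> d k" for k j
  proof -
    have e: "x k $ j - xb k = (x k - A k) $ j" unfolding Axb by simp
    show ?thesis unfolding d_def e by (rule Finite_Cartesian_Product.norm_nth_le)
  qed
  define g where "g k = (1 / n) *\<^sub>R (\<Sum>j\<in>UNIV. gr j (x k $ j))" for k
  have F2: "xb (Suc k) = xb k - mu *\<^sub>R g k" for k
  proof -
    have "(\<Sum>j\<in>UNIV. x (Suc k) $ j) = (\<Sum>j\<in>UNIV. y k $ j)"
      unfolding F1 by (rule colsum_kron[OF cs])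
    also have "\<dots> = (\<Sum>j\<in>UNIV. x k $ j) - mu *\<^sub>R (\<Sum>j\<in>UNIV. gr j (x k $ j))"
      unfolding y_def by (simp add: sum_subtractf scaleR_sum_right)
    finally show ?thesis unfolding xb_def g_def by (simp add: scaleR_diff_right)
  qed
  have F3: "norm (g k - Gf (xb k)) \<le> L * d k" for k
  proof -
    have "g k - Gf (xb k) = (1 / n) *\<^sub>R (\<Sum>j\<in>UNIV. gr j (x k $ j) - gr j (xb k))"
      unfolding g_def Gf_def by (simp add: sum_subtractf scaleR_diff_right)
    then have "norm (g k - Gf (xb k)) = (1 / n) * norm (\<Sum>j\<in>UNIV. gr j (x k $ j) - gr j (xb k))" using n0 by simp
    also have "\<dots> \<le> (1 / n) * (\<Sum>j\<in>(UNIV::'n set). L * d k)"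
    proof -
      have "norm (\<Sum>j\<in>UNIV. gr j (x k $ j) - gr j (xb k)) \<le> (\<Sum>j\<in>UNIV. norm (gr j (x k $ j) - gr j (xb k)))" by (rule norm_sum)
      also have "\<dots> \<le> (\<Sum>j\<in>(UNIV::'n set). L * d k)"
      proof (rule sum_mono)
        fix j
        show "norm (gr j (x k $ j) - gr j (xb k)) \<le> L * d k"
          using lipi[of j "x k $ j" "xb k"] comp[of k j] L0 by (meson mult_left_mono less_imp_le order.trans)
      qed
      finally show ?thesis using n0 by (intro mult_left_mono) auto
    qed
    also have "\<dots> = L * d k" using n0 unfolding n_def by simp
    finally show ?thesis .
  qed
  have F4: "a (Suc k) \<le> a k + mu * L * d k" for k
  proof -
    have "xb (Suc k) - xs = ((xb k - mu *\<^sub>R Gf (xb k)) - xs) - mu *\<^sub>R (g k - Gf (xb k))"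
      unfolding F2 by (simp add: algebra_simps)
    then have "a (Suc k) \<le> norm ((xb k - mu *\<^sub>R Gf (xb k)) - xs) + norm (mu *\<^sub>R (g k - Gf (xb k)))"
      unfolding a_def by (metis norm_triangle_ineq4)
    also have "\<dots> \<le> a k + mu * (L * d k)"
      using nonexp[of "xb k"] F3[of k] mu(1) unfolding a_def by (intro add_mono) (auto intro: mult_left_mono)
    finally show ?thesis by (simp add: mult.assoc)
  qed
  have F5: "d (Suc k) \<le> b k * norm (y k)" for k
  proof -
    have "A (Suc k) = avg_stack (y k)" unfolding A_def F1 by (rule avg_kron[OF cs])
    then have "d (Suc k) = norm (kron (matpow W (t k)) (y k) - avg_stack (y k))"
      unfolding d_def F1[symmetric] by simp
    also have "\<dots> \<le> b k * norm (y k)" unfolding b_def using tpos by (intro consensus_bound[OF ds]) auto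
    finally show ?thesis .
  qed
  define C where "C = (\<Sum>j\<in>UNIV. norm (gr j xs))"
  define K where "K = n * (1 + mu * L + norm xs + mu * C)"
  have C0: "C \<ge> 0" unfolding C_def by (simp add: sum_nonneg)
  have K0: "K \<ge> 0" unfolding K_def using n0 mu(1) L0 C0 by simp
  have F6: "norm (y k) \<le> K * (1 + a k + d k)" for k
  proof -
    have yj: "norm (y k $ j) \<le> (1 + mu * L) * (a k + d k) + (norm xs + mu * C)" for j
    proof -
      have "norm (y k $ j) \<le> norm (x k $ j) + mu * norm (gr j (x k $ j))"
        unfolding y_def using mu(1) by (simp add: norm_triangle_ineq4[THEN order.trans])
      moreover have "norm (x k $ j - xs) \<le> d k + a k"
        using norm_triangle_ineq[of "x k $ j - xb k" "xb k - xs"] comp[of k j] unfolding a_def by simp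
      moreover have "norm (x k $ j) \<le> norm (x k $ j - xs) + norm xs"
        using norm_triangle_ineq[of "x k $ j - xs" xs] by simp
      moreover have "norm (gr j (x k $ j)) \<le> norm (gr j xs) + L * norm (x k $ j - xs)"
        using norm_triangle_ineq[of "gr j (x k $ j) - gr j xs" "gr j xs"] lipi[of j "x k $ j" xs] by simp
      moreover have "norm (gr j xs) \<le> C" unfolding C_def by (rule member_le_sum) auto
      ultimately have "norm (y k $ j) \<le> (d k + a k) + norm xs + mu * (C + L * (d k + a k))"
        using mu(1) L0 by (smt (verit) mult_left_mono)
      then show ?thesis by (simp add: algebra_simps)
    qed
    define K1 where "K1 = 1 + mu * L + norm xs + mu * C"
    have "(1 + mu * L) * (a k + d k) + (norm xs + mu * C) \<le> K1 * (1 + a k + d k)"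
    proof -
      have "(1 + mu * L) * (a k + d k) \<le> K1 * (a k + d k)"
        unfolding K1_def using a0[of k] d0[of k] mu(1) C0 by (intro mult_right_mono) auto
      moreover have "norm xs + mu * C \<le> K1" unfolding K1_def using mu(1) L0 by simp
      moreover have "K1 * (1 + a k + d k) = K1 + K1 * (a k + d k)" by (simp add: algebra_simps)
      ultimately show ?thesis by linarith
    qed
    then have yj': "norm (y k $ j) \<le> K1 * (1 + a k + d k)" for j using yj[of j] by linarith
    have "norm (y k) \<le> (\<Sum>j\<in>UNIV. norm (y k $ j))" by (rule norm_le_sum_comp)
    also have "\<dots> \<le> (\<Sum>j\<in>(UNIV::'n set). K1 * (1 + a k + d k))" by (rule sum_mono) (rule yj')
    also have "\<dots> = K * (1 + a k + d k)" unfolding K_def K1_def n_def by simp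
    finally show ?thesis .
  qed
  define c where "c = 1 + mu * L"
  have c0: "c \<ge> 1" unfolding c_def using mu(1) L0 by simp
  define u where "u k = 1 + a k + c * d k" for k
  have u_ge: "1 + a k + d k \<le> u k" for k unfolding u_def using c0 d0[of k] by (simp add: mult_le_cancel_right1)
  have u0: "u k \<ge> 0" for k using u_ge[of k] a0[of k] d0[of k] by linarith
  have F7: "u (Suc k) \<le> (1 + c * K * b k) * u k" for k
  proof -
    have "c * d (Suc k) \<le> c * (b k * (K * (1 + a k + d k)))"
      using F5[of k] F6[of k] c0 b0[of k] by (meson mult_left_mono order.trans less_le_trans zero_less_one less_imp_le)
    also have "\<dots> \<le> c * (b k * (K * u k))"
      using u_ge[of k] c0 b0[of k] K0 by (intro mult_left_mono) auto
    finally have 1: "c * d (Suc k) \<le> c * K * b k * u k" by (simp add: algebra_simps)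
    have 2: "1 + a (Suc k) \<le> u k" using F4[of k] unfolding u_def c_def using d0[of k] by (simp add: algebra_simps)
    show ?thesis using 1 2 unfolding u_def[of "Suc k"] by (simp add: algebra_simps)
  qed
  define S where "S = suminf b"
  have bsum: "summable b" using tsum unfolding b_def .
  have F8: "u k \<le> u 0 * exp (c * K * (\<Sum>j<k. b j))" for k
  proof (induction k)
    case 0 then show ?case by simp
  next
    case (Suc k)
    have "u (Suc k) \<le> (1 + c * K * b k) * u k" by (rule F7)
    also have "\<dots> \<le> exp (c * K * b k) * (u 0 * exp (c * K * (\<Sum>j<k. b j)))"
      using Suc.IH u0[of k] by (intro mult_mono) auto
    also have "\<dots> = u 0 * exp (c * K * (\<Sum>j<Suc k. b j))"
      by (simp add: exp_add[symmetric] algebra_simps)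
    finally show ?case .
  qed
  define U where "U = u 0 * exp (c * K * S)"
  have uU: "u k \<le> U" for k
  proof -
    have "(\<Sum>j<k. b j) \<le> S" unfolding S_def using bsum b0 by (intro sum_le_suminf) auto
    then have "exp (c * K * (\<Sum>j<k. b j)) \<le> exp (c * K * S)"
      using c0 K0 by (simp add: mult_left_mono)
    then show ?thesis using F8[of k] u0[of 0] unfolding U_def by (meson mult_left_mono order.trans)
  qed
  have aU: "a k \<le> U" for k using uU[of k] u_ge[of k] d0[of k] by linarith
  have dU: "1 + a k + d k \<le> U" for k using uU[of k] u_ge[of k] by linarith
  have P1: "(\<lambda>k. norm (avg_stack (x k) - (\<chi> i. xs))) \<in> O(\<lambda>k. 1)"
  proof (rule bigoI[where c = "n * U"], rule always_eventually, rule allI)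
    fix k
    have "norm (avg_stack (x k) - (\<chi> i. xs)) \<le> (\<Sum>i\<in>UNIV. norm ((avg_stack (x k) - (\<chi> i. xs)) $ i))"
      by (rule norm_le_sum_comp)
    also have "\<dots> = n * a k" unfolding A_def[symmetric] Axb a_def n_def by simp
    also have "\<dots> \<le> n * U" using aU[of k] n0 by simp
    finally show "norm (norm (avg_stack (x k) - (\<chi> i. xs))) \<le> n * U * norm (1::real)" by simp
  qed
  have P2: "(\<lambda>k. norm (avg_stack (x (Suc k)) - x (Suc k))) \<in> O(\<lambda>k. beta W ^ t k)"
  proof (rule bigoI[where c = "K * U"], rule always_eventually, rule allI)
    fix k
    have "norm (avg_stack (x (Suc k)) - x (Suc k)) = d (Suc k)"
      unfolding d_def A_def by (rule norm_minus_commute)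
    also have "\<dots> \<le> b k * (K * (1 + a k + d k))"
      using F5[of k] F6[of k] b0[of k] by (meson mult_left_mono order.trans)
    also have "\<dots> \<le> b k * (K * U)"
      using dU[of k] K0 b0[of k] by (intro mult_left_mono) auto
    finally show "norm (norm (avg_stack (x (Suc k)) - x (Suc k))) \<le> K * U * norm (beta W ^ t k)"
      using b0[of k] unfolding b_def by (simp add: mult.commute)
  qed
  show ?thesis using P1 P2 by blast
qed

end
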